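(* Let $n\ge1$, let $g=(g_{ij})$ be a nondegenerate symmetric complex $n\times n$ matrix with inverse $\eta=(\eta_{ij})=g^{-1}$, and let $(\alpha^{ij})$ be a symmetric complex $n\times n$ matrix. Consider the system of hydrodynamic type $$u^i_t=\big(\eta_{nj}u^ju^i+\alpha^{ij}\eta_{jk}u^k\big)_x,\qquad i=1,\dots,n,$$ (summation over repeated indices), written as $u^i_t=A^i_k(u)u^k_x$ with $A^i_k=\eta_{nj}u^j\delta^i_k+u^i\eta_{nk}+\alpha^{ij}\eta_{jk}$. Then the Haantjes tensor of $A=(A^i_k(u))$ vanishes identically.
   Context: Regard $A$ as a field of endomorphisms of the tangent bundle of $\mathbb{C}^n$ with coordinates $u=(u^1,\dots,u^n)$. Its Nijenhuis tensor is $N_A(X,Y)=[AX,AY]-A[X,AY]-A[AX,Y]+A^2[X,Y]$ (with $[\,,\,]$ the Lie bracket of vector fields), and its Haantjes tensor is $H_A(X,Y)=N_A(AX,AY)-AN_A(X,AY)-AN_A(AX,Y)+A^2N_A(X,Y)$. *)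

theory Defs
  imports "HOL-Analysis.Analysis"
begin

text \<open>Points of C^n are functions nat => complex; only coordinates 0..n-1 are used
  (0-based: paper index i corresponds to i-1).\<close>

type_synonym point = "nat \<Rightarrow> complex"
type_synonym vfield = "point \<Rightarrow> nat \<Rightarrow> complex"
type_synonym efield = "point \<Rightarrow> nat \<Rightarrow> nat \<Rightarrow> complex"

definition pd :: "nat \<Rightarrow> (point \<Rightarrow> complex) \<Rightarrow> point \<Rightarrow> complex" where
  "pd l f u = deriv (\<lambda>t. f (u(l := t))) (u l)"

definition admissible_vf :: "vfield \<Rightarrow> bool" where
  "admissible_vf X \<longleftrightarrow>
     (\<forall>u l i. (\<lambda>t. X (u(l := t)) i) field_differentiable (at (u l)))"

definition vapp :: "nat \<Rightarrow> efield \<Rightarrow> vfield \<Rightarrow> vfield" where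
  "vapp n A X = (\<lambda>u i. \<Sum>k<n. A u i k * X u k)"

definition lie :: "nat \<Rightarrow> vfield \<Rightarrow> vfield \<Rightarrow> vfield" where
  "lie n X Y = (\<lambda>u i. \<Sum>l<n. X u l * pd l (\<lambda>v. Y v i) u - Y u l * pd l (\<lambda>v. X v i) u)"

definition vadd :: "vfield \<Rightarrow> vfield \<Rightarrow> vfield" where
  "vadd X Y = (\<lambda>u i. X u i + Y u i)"

definition vsub :: "vfield \<Rightarrow> vfield \<Rightarrow> vfield" where
  "vsub X Y = (\<lambda>u i. X u i - Y u i)"

definition nijenhuis :: "nat \<Rightarrow> efield \<Rightarrow> vfield \<Rightarrow> vfield \<Rightarrow> vfield" where
  "nijenhuis n A X Y =
     vadd (vsub (vsub (lie n (vapp n A X) (vapp n A Y))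
                      (vapp n A (lie n X (vapp n A Y))))
                (vapp n A (lie n (vapp n A X) Y)))
          (vapp n A (vapp n A (lie n X Y)))"

definition haantjes :: "nat \<Rightarrow> efield \<Rightarrow> vfield \<Rightarrow> vfield \<Rightarrow> vfield" where
  "haantjes n A X Y =
     vadd (vsub (vsub (nijenhuis n A (vapp n A X) (vapp n A Y))
                      (vapp n A (nijenhuis n A X (vapp n A Y))))
                (vapp n A (nijenhuis n A (vapp n A X) Y)))
          (vapp n A (vapp n A (nijenhuis n A X Y)))"

text \<open>The matrix A^i_k(u) = eta_{nj} u^j delta^i_k + u^i eta_{nk} + alpha^{ij} eta_{jk},
  with the paper's index n being index n-1 here.\<close>
definition sysA :: "nat \<Rightarrow> (nat \<Rightarrow> nat \<Rightarrow> complex) \<Rightarrow> (nat \<Rightarrow> nat \<Rightarrow> complex) \<Rightarrow> efield" where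
  "sysA n eta alpha = (\<lambda>u i k.
     (\<Sum>j<n. eta (n - 1) j * u j) * (if i = k then 1 else 0)
     + u i * eta (n - 1) k + (\<Sum>j<n. alpha i j * eta j k))"

end

theory Submission
  imports Defs
begin

definition adm_A :: "efield \<Rightarrow> bool" where
  "adm_A A \<longleftrightarrow> (\<forall>u l i k. (\<lambda>t. A (u(l := t)) i k) field_differentiable (at (u l)))"

definition mv :: "nat \<Rightarrow> (nat \<Rightarrow> nat \<Rightarrow> complex) \<Rightarrow> (nat \<Rightarrow> complex) \<Rightarrow> nat \<Rightarrow> complex" where
  "mv n M x = (\<lambda>i. \<Sum>k<n. M i k * x k)"

definition DD :: "nat \<Rightarrow> vfield \<Rightarrow> point \<Rightarrow> (nat \<Rightarrow> complex) \<Rightarrow> nat \<Rightarrow> complex" where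
  "DD n Z u V = (\<lambda>i. \<Sum>l<n. V l * pd l (\<lambda>v. Z v i) u)"

definition Tm :: "nat \<Rightarrow> efield \<Rightarrow> point \<Rightarrow> (nat \<Rightarrow> complex) \<Rightarrow> (nat \<Rightarrow> complex) \<Rightarrow> nat \<Rightarrow> complex" where
  "Tm n A u V q = (\<lambda>i. \<Sum>l<n. V l * (\<Sum>k<n. pd l (\<lambda>v. A v i k) u * q k))"

lemma vapp_at: "vapp n A Z u = mv n (A u) (Z u)"
  by (simp add: vapp_def mv_def)

lemma mv_add: "mv n M (\<lambda>i. f i + g i) = (\<lambda>i. mv n M f i + mv n M g i)"
  by (simp add: mv_def distrib_left sum.distrib)

lemma mv_diff: "mv n M (\<lambda>i. f i - g i) = (\<lambda>i. mv n M f i - mv n M g i)"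
  by (simp add: mv_def right_diff_distrib sum_subtractf)

lemma mv_cmult: "mv n M (\<lambda>i. c * f i) = (\<lambda>i. c * mv n M f i)"
  by (simp add: mv_def sum_distrib_left algebra_simps)

lemma pd_deriv:
  assumes "(\<lambda>t. f (u(l := t))) field_differentiable (at (u l))"
  shows "((\<lambda>t. f (u(l := t))) has_field_derivative pd l f u) (at (u l))"
  using field_differentiable_derivI[OF assms] by (simp add: pd_def)

lemma pd_vapp:
  assumes A: "adm_A A" and Q: "admissible_vf Q"
  shows "pd l (\<lambda>v. vapp n A Q v i) u = (\<Sum>k<n. pd l (\<lambda>v. A v i k) u * Q u k + A u i k * pd l (\<lambda>v. Q v k) u)"
proof -
  have "((\<lambda>t. vapp n A Q (u(l := t)) i) has_field_derivative
      (\<Sum>k<n. pd l (\<lambda>v. A v i k) u * Q u k + A u i k * pd l (\<lambda>v. Q v k) u)) (at (u l))"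
    unfolding vapp_def
  proof (rule DERIV_sum)
    fix k
    have a: "((\<lambda>t. A (u(l := t)) i k) has_field_derivative pd l (\<lambda>v. A v i k) u) (at (u l))"
      using A by (intro pd_deriv) (simp add: adm_A_def)
    have q: "((\<lambda>t. Q (u(l := t)) k) has_field_derivative pd l (\<lambda>v. Q v k) u) (at (u l))"
      using Q by (intro pd_deriv) (simp add: admissible_vf_def)
    show "((\<lambda>t. A (u(l := t)) i k * Q (u(l := t)) k) has_field_derivative
        pd l (\<lambda>v. A v i k) u * Q u k + A u i k * pd l (\<lambda>v. Q v k) u) (at (u l))"
      using DERIV_mult[OF a q] by (simp add: algebra_simps)
  qed
  then show ?thesis by (simp add: pd_def DERIV_imp_deriv)
qed

lemma adm_vapp:
  assumes A: "adm_A A" and Q: "admissible_vf Q"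
  shows "admissible_vf (vapp n A Q)"
  unfolding admissible_vf_def vapp_def
proof (intro allI)
  fix u l i
  show "(\<lambda>t. \<Sum>k<n. A (u(l := t)) i k * Q (u(l := t)) k) field_differentiable at (u l)"
    using A Q unfolding adm_A_def admissible_vf_def
    by (intro field_differentiable_sum field_differentiable_mult) auto
qed

lemma lie_DD: "lie n X Y u = (\<lambda>i. DD n Y u (X u) i - DD n X u (Y u) i)"
  by (simp add: lie_def DD_def sum_subtractf)

lemma DD_vapp:
  assumes A: "adm_A A" and Q: "admissible_vf Q"
  shows "DD n (vapp n A Q) u V = (\<lambda>i. mv n (A u) (DD n Q u V) i + Tm n A u V (Q u) i)"
proof
  fix i
  have sw: "(\<Sum>l<n. \<Sum>k<n. A u i k * (V l * pd l (\<lambda>v. Q v k) u))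
      = (\<Sum>k<n. \<Sum>l<n. A u i k * (V l * pd l (\<lambda>v. Q v k) u))"
    by (rule sum.swap[of "\<lambda>l k. A u i k * (V l * pd l (\<lambda>v. Q v k) u)"])
  have "DD n (vapp n A Q) u V i = (\<Sum>l<n. \<Sum>k<n. V l * (pd l (\<lambda>v. A v i k) u * Q u k)
          + A u i k * (V l * pd l (\<lambda>v. Q v k) u))"
    by (simp add: DD_def pd_vapp[OF A Q] sum_distrib_left algebra_simps)
  also have "\<dots> = (\<Sum>l<n. \<Sum>k<n. V l * (pd l (\<lambda>v. A v i k) u * Q u k))
       + (\<Sum>l<n. \<Sum>k<n. A u i k * (V l * pd l (\<lambda>v. Q v k) u))"
    by (simp only: sum.distrib sw)
  also have "\<dots> = mv n (A u) (DD n Q u V) i + Tm n A u V (Q u) i"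
    by (simp add: mv_def DD_def Tm_def sum_distrib_left sw)
  finally show "DD n (vapp n A Q) u V i = mv n (A u) (DD n Q u V) i + Tm n A u V (Q u) i" .
qed

lemma N_formula:
  assumes A: "adm_A A" and X: "admissible_vf X" and Y: "admissible_vf Y"
  shows "nijenhuis n A X Y u = (\<lambda>i. Tm n A u (mv n (A u) (X u)) (Y u) i
     - Tm n A u (mv n (A u) (Y u)) (X u) i
     - mv n (A u) (Tm n A u (X u) (Y u)) i + mv n (A u) (Tm n A u (Y u) (X u)) i)"
  apply (simp add: nijenhuis_def vadd_def vsub_def vapp_at lie_DD DD_vapp[OF A] X Y adm_vapp[OF A]
      mv_add mv_diff)
  apply (rule ext)
  apply (simp add: algebra_simps)
  done


lemma coord_deriv: "((\<lambda>t. (u(l := t)) j) has_field_derivative (if j = l then 1 else 0)) (at x)"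
  by (cases "j = l") (auto intro!: derivative_eq_intros)

lemma sysA_deriv:
  "((\<lambda>t. sysA n eta alpha (u(l := t)) i k) has_field_derivative
     (\<Sum>j<n. eta (n - 1) j * (if j = l then 1 else 0)) * (if i = k then 1 else 0)
     + (if i = l then 1 else 0) * eta (n - 1) k) (at x)"
proof -
  have s: "((\<lambda>t. \<Sum>j<n. eta (n - 1) j * (u(l := t)) j) has_field_derivative
     (\<Sum>j<n. eta (n - 1) j * (if j = l then 1 else 0))) (at x)"
    by (intro DERIV_sum DERIV_cmult coord_deriv)
  have "((\<lambda>t. (\<Sum>j<n. eta (n - 1) j * (u(l := t)) j) * (if i = k then 1 else 0)
     + (u(l := t)) i * eta (n - 1) k + (\<Sum>j<n. alpha i j * eta j k)) has_field_derivative
     (\<Sum>j<n. eta (n - 1) j * (if j = l then 1 else 0)) * (if i = k then 1 else 0)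
     + (if i = l then 1 else 0) * eta (n - 1) k + 0) (at x)"
    by (intro DERIV_add DERIV_cmult_right s coord_deriv DERIV_const)
  then show ?thesis unfolding sysA_def by simp
qed

lemma adm_sysA: "adm_A (sysA n eta alpha)"
  unfolding adm_A_def field_differentiable_def using sysA_deriv by blast

lemma pd_sysA:
  assumes "l < n"
  shows "pd l (\<lambda>v. sysA n eta alpha v i k) u =
     eta (n - 1) l * (if i = k then 1 else 0) + (if i = l then eta (n - 1) k else 0)"
proof -
  have "pd l (\<lambda>v. sysA n eta alpha v i k) u = (\<Sum>j<n. eta (n - 1) j * (if j = l then 1 else 0)) * (if i = k then 1 else 0)
     + (if i = l then 1 else 0) * eta (n - 1) k"
    unfolding pd_def by (rule DERIV_imp_deriv[OF sysA_deriv])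
  also have "(\<Sum>j<n. eta (n - 1) j * (if j = l then 1 else 0)) = eta (n - 1) l"
    using assms by (simp add: if_distrib cong: if_cong)
  finally show ?thesis by simp
qed

definition aw :: "nat \<Rightarrow> (nat \<Rightarrow> nat \<Rightarrow> complex) \<Rightarrow> (nat \<Rightarrow> complex) \<Rightarrow> complex" where
  "aw n eta V = (\<Sum>l<n. eta (n - 1) l * V l)"

lemma Tm_sysA:
  assumes "i < n"
  shows "Tm n (sysA n eta alpha) u V q i = aw n eta V * q i + aw n eta q * V i"
proof -
  have inner: "(\<Sum>k<n. pd l (\<lambda>v. sysA n eta alpha v i k) u * q k)
      = eta (n - 1) l * q i + (if i = l then aw n eta q else 0)" if "l < n" for l
  proof -
    have "(\<Sum>k<n. pd l (\<lambda>v. sysA n eta alpha v i k) u * q k)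
      = (\<Sum>k<n. (if k = i then eta (n - 1) l * q k else 0) + (if i = l then eta (n - 1) k * q k else 0))"
      by (intro sum.cong refl) (auto simp: pd_sysA that)
    also have "\<dots> = eta (n - 1) l * q i + (if i = l then aw n eta q else 0)"
      using assms by (simp add: sum.distrib aw_def)
    finally show ?thesis .
  qed
  have "Tm n (sysA n eta alpha) u V q i = (\<Sum>l<n. V l * (eta (n - 1) l * q i + (if i = l then aw n eta q else 0)))"
    unfolding Tm_def by (intro sum.cong refl) (simp add: inner)
  also have "\<dots> = (\<Sum>l<n. (eta (n - 1) l * V l) * q i + (if l = i then aw n eta q * V l else 0))"
    by (intro sum.cong refl) (auto simp: algebra_simps)
  also have "\<dots> = aw n eta V * q i + aw n eta q * V i"
    using assms by (simp add: sum.distrib aw_def sum_distrib_right)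
  finally show ?thesis .
qed

lemma mv_Tm_sysA:
  "mv n M (Tm n (sysA n eta alpha) u V q) = (\<lambda>i. aw n eta V * mv n M q i + aw n eta q * mv n M V i)"
proof -
  have "mv n M (Tm n (sysA n eta alpha) u V q) = mv n M (\<lambda>i. aw n eta V * q i + aw n eta q * V i)"
    unfolding mv_def by (intro ext sum.cong) (auto simp: Tm_sysA)
  then show ?thesis by (simp add: mv_add mv_cmult)
qed

lemma adm_vapp_sysA: "admissible_vf Q \<Longrightarrow> admissible_vf (vapp n (sysA n eta alpha) Q)"
  by (rule adm_vapp[OF adm_sysA])

theorem proposition7p1:
  fixes n :: nat and g eta alpha :: "nat \<Rightarrow> nat \<Rightarrow> complex"
  assumes "n \<ge> 1"
    and "\<forall>i<n. \<forall>j<n. g i j = g j i"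
    and "\<forall>i<n. \<forall>k<n. (\<Sum>j<n. g i j * eta j k) = (if i = k then 1 else 0)"
    and "\<forall>i<n. \<forall>k<n. (\<Sum>j<n. eta i j * g j k) = (if i = k then 1 else 0)"
    and "\<forall>i<n. \<forall>j<n. alpha i j = alpha j i"
    and "admissible_vf X" and "admissible_vf Y"
  shows "\<forall>u. \<forall>i<n. haantjes n (sysA n eta alpha) X Y u i = 0"
proof (intro allI impI)
  fix u i assume i: "i < n"
  note X = \<open>admissible_vf X\<close> and Y = \<open>admissible_vf Y\<close>
  show "haantjes n (sysA n eta alpha) X Y u i = 0"
    apply (simp add: haantjes_def vadd_def vsub_def vapp_at N_formula[OF adm_sysA] X Y adm_vapp_sysA
        mv_add mv_diff mv_cmult mv_Tm_sysA Tm_sysA[OF i])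
    done
qed

end
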